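(* Let $a<b<c$ be elements of $\mathcal{C}_n$ and let $k$ be an integer with $n-c\le k\le n-b-1$. Then the layer $\mathcal{L}^{k}_{c}\left(\triangle^{(n)}\{a,b,c\}\right)=\{a_ib_{n-k-i}c_k:\ 0\le i\le n-k\}$ is a subsemiring of $\triangle^{(n)}\{a,b,c\}$.
   Context: $\mathcal{C}_n=\{0,1,\dots,n-1\}$ with its usual order; $\widehat{\mathcal{E}}_{\mathcal{C}_n}$ is the set of all order-preserving maps $\mathcal{C}_n\to\mathcal{C}_n$ (not required to fix $0$), a semiring with $(\alpha+\beta)(x)=\max(\alpha(x),\beta(x))$ and $(\alpha\cdot\beta)(x)=\beta(\alpha(x))$. The notation $a_ib_\ell c_k$ (with $i+\ell+k=n$) denotes the map sending $0,\dots,i-1$ to $a$, the next $\ell$ elements to $b$ and the last $k$ elements to $c$. The triangle $\triangle^{(n)}\{a,b,c\}$ is the set of $\alpha\in\widehat{\mathcal{E}}_{\mathcal{C}_n}$ with image in $\{a,b,c\}$; the layer $\mathcal{L}^{k}_{c}$ is the set of elements of the triangle mapping exactly $k$ elements of $\mathcal{C}_n$ to $c$. *)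

theory Defs
  imports Main
begin

text \<open>Elements of the chain C_n are the naturals 0..n-1. An order-preserving
  self-map of C_n is represented by a function nat => nat that is monotone on
  {0..<n}, maps {0..<n} into {0..<n}, and is 0 outside {0..<n} (extensional
  convention, so that maps are equal iff they agree on C_n).\<close>

definition OP :: "nat \<Rightarrow> (nat \<Rightarrow> nat) set" where
  "OP n = {f. (\<forall>x<n. f x < n) \<and> (\<forall>x y. x \<le> y \<longrightarrow> y < n \<longrightarrow> f x \<le> f y)
              \<and> (\<forall>x. n \<le> x \<longrightarrow> f x = 0)}"

definition op_plus :: "nat \<Rightarrow> (nat \<Rightarrow> nat) \<Rightarrow> (nat \<Rightarrow> nat) \<Rightarrow> (nat \<Rightarrow> nat)" where
  "op_plus n \<alpha> \<beta> = (\<lambda>x. if x < n then max (\<alpha> x) (\<beta> x) else 0)"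

definition op_times :: "nat \<Rightarrow> (nat \<Rightarrow> nat) \<Rightarrow> (nat \<Rightarrow> nat) \<Rightarrow> (nat \<Rightarrow> nat)" where
  "op_times n \<alpha> \<beta> = (\<lambda>x. if x < n then \<beta> (\<alpha> x) else 0)"

definition triangle :: "nat \<Rightarrow> nat \<Rightarrow> nat \<Rightarrow> nat \<Rightarrow> (nat \<Rightarrow> nat) set" where
  "triangle n a b c = {f \<in> OP n. \<forall>x<n. f x \<in> {a, b, c}}"

definition layer :: "nat \<Rightarrow> nat \<Rightarrow> nat \<Rightarrow> (nat \<Rightarrow> nat) set \<Rightarrow> (nat \<Rightarrow> nat) set" where
  "layer n k c S = {f \<in> S. card {x. x < n \<and> f x = c} = k}"

text \<open>The map a_i b_l c_k (with i + l + k = n).\<close>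
definition abc_map :: "nat \<Rightarrow> nat \<Rightarrow> nat \<Rightarrow> nat \<Rightarrow> nat \<Rightarrow> nat \<Rightarrow> nat \<Rightarrow> (nat \<Rightarrow> nat)" where
  "abc_map n a b c i l k = (\<lambda>x. if x < n then (if x < i then a else if x < i + l then b else c) else 0)"

definition subsemiring :: "nat \<Rightarrow> (nat \<Rightarrow> nat) set \<Rightarrow> (nat \<Rightarrow> nat) set \<Rightarrow> bool" where
  "subsemiring n T S \<longleftrightarrow> T \<subseteq> S \<and> T \<noteq> {} \<and>
     (\<forall>f\<in>T. \<forall>g\<in>T. op_plus n f g \<in> T \<and> op_times n f g \<in> T)"

end

theory Submission
  imports Defs
begin

lemma up_closed_eq:
  fixes C :: "nat set"
  assumes "C \<subseteq> {..<n}" "\<And>x y. x \<in> C \<Longrightarrow> x \<le> y \<Longrightarrow> y < n \<Longrightarrow> y \<in> C"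
  shows "C = {n - card C..<n}"
proof (cases "C = {}")
  case True then show ?thesis by auto
next
  case False
  have fin: "finite C" using assms(1) finite_subset by blast
  define m where "m = Min C"
  have mC: "m \<in> C" using Min_in[OF fin False] m_def by simp
  have "C = {m..<n}"
  proof
    show "C \<subseteq> {m..<n}" using assms(1) fin m_def by auto
    show "{m..<n} \<subseteq> C" using assms(2)[OF mC] by auto
  qed
  moreover have "m < n" using mC assms(1) by auto
  ultimately show ?thesis by simp
qed

lemma down_closed_eq:
  fixes A :: "nat set"
  assumes "A \<subseteq> {..<n}" "\<And>x y. x \<in> A \<Longrightarrow> y \<le> x \<Longrightarrow> y \<in> A"
  shows "A = {..<card A}"
proof (cases "A = {}")
  case True then show ?thesis by auto
next
  case False
  have fin: "finite A" using assms(1) finite_subset by blast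
  define m where "m = Max A"
  have mA: "m \<in> A" using Max_in[OF fin False] m_def by simp
  have "A = {..<Suc m}"
  proof
    show "A \<subseteq> {..<Suc m}" using fin m_def by (auto simp: less_Suc_eq_le)
    show "{..<Suc m} \<subseteq> A" using assms(2)[OF mA] by (auto simp: less_Suc_eq_le)
  qed
  then show ?thesis by simp
qed

theorem proposition29:
  fixes n a b c k :: nat
  assumes "a < b" and "b < c" and "c < n"
    and "n - c \<le> k" and "k + b + 1 \<le> n"
  shows "layer n k c (triangle n a b c) = {abc_map n a b c i (n - k - i) k | i. i \<le> n - k}
       \<and> subsemiring n (layer n k c (triangle n a b c)) (triangle n a b c)"
proof -
  define g where "g i = abc_map n a b c i (n - k - i) k" for i
  have gx: "g i x = (if x < n then (if x < i then a else if x < n - k then b else c) else 0)"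
    if "i \<le> n - k" for i x
    using that by (auto simp: g_def abc_map_def)
  have gin: "g i \<in> layer n k c (triangle n a b c)" if i: "i \<le> n - k" for i
  proof -
    have "g i \<in> OP n"
      unfolding OP_def using assms by (auto simp: gx[OF i])
    moreover have "\<forall>x<n. g i x \<in> {a,b,c}" by (auto simp: gx[OF i])
    moreover have "{x. x < n \<and> g i x = c} = {n-k..<n}"
      using assms i by (auto simp: gx[OF i])
    moreover have "card {n-k..<n} = k" using assms by simp
    ultimately show ?thesis unfolding layer_def triangle_def by simp
  qed
  have lsub: "f \<in> (\<lambda>i. g i) ` {..n-k}" if f: "f \<in> layer n k c (triangle n a b c)" for f
  proof -
    have fOP: "f \<in> OP n" and fv: "\<forall>x<n. f x \<in> {a,b,c}"
      and fc: "card {x. x < n \<and> f x = c} = k"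
      using f by (auto simp: layer_def triangle_def)
    have mono: "\<And>x y. x \<le> y \<Longrightarrow> y < n \<Longrightarrow> f x \<le> f y"
      and out: "\<And>x. n \<le> x \<Longrightarrow> f x = 0" using fOP by (auto simp: OP_def)
    have C: "{x. x < n \<and> f x = c} = {n - k..<n}"
    proof -
      have "{x. x < n \<and> f x = c} = {n - card {x. x < n \<and> f x = c}..<n}"
      proof (rule up_closed_eq)
        fix x y assume "x \<in> {x. x < n \<and> f x = c}" "x \<le> y" "y < n"
        then show "y \<in> {x. x < n \<and> f x = c}"
          using mono[of x y] fv assms by fastforce
      qed auto
      then show ?thesis using fc by simp
    qed
    define i where "i = card {x. x < n \<and> f x = a}"
    have A: "{x. x < n \<and> f x = a} = {..<i}"
      unfolding i_def
    proof (rule down_closed_eq)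
      fix x y assume "x \<in> {x. x < n \<and> f x = a}" "y \<le> x"
      then show "y \<in> {x. x < n \<and> f x = a}"
        using mono[of y x] fv[rule_format, of y] assms by fastforce
    qed auto
    have i: "i \<le> n - k"
    proof (rule ccontr)
      assume "\<not> i \<le> n - k"
      then have "n - k < i" by simp
      moreover have "i \<le> n" unfolding i_def
        using card_mono[of "{..<n}" "{x. x < n \<and> f x = a}"] by auto
      ultimately have "n - k \<in> {..<i}" "n - k \<in> {n-k..<n}" by auto
      then have "n - k \<in> {x. x < n \<and> f x = a}" "n - k \<in> {x. x < n \<and> f x = c}"
        using A C by simp_all
      then have "f (n-k) = a" "f (n-k) = c" by simp_all
      then show False using assms by simp
    qed
    have "f = g i"
    proof
      fix x
      show "f x = g i x"
      proof (cases "x < n")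
        case False then show ?thesis using out by (simp add: gx[OF i])
      next
        case True
        have ea: "f x = a \<longleftrightarrow> x < i" using A True by (metis (mono_tags) lessThan_iff mem_Collect_eq)
        have ec: "f x = c \<longleftrightarrow> n - k \<le> x" using C True by (metis (mono_tags) atLeastLessThan_iff mem_Collect_eq)
        show ?thesis using True ea ec fv i by (auto simp: gx[OF i])
      qed
    qed
    then show ?thesis using i by auto
  qed
  have eq: "layer n k c (triangle n a b c) = (\<lambda>i. g i) ` {..n-k}"
    using gin lsub by auto
  have eq2: "{abc_map n a b c i (n - k - i) k | i. i \<le> n - k} = (\<lambda>i. g i) ` {..n-k}"
    by (auto simp: g_def)
  have plus: "op_plus n (g i) (g j) = g (min i j)" if "i \<le> n-k" "j \<le> n-k" for i j
  proof
    fix x show "op_plus n (g i) (g j) x = g (min i j) x"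
    proof -
      have m: "min i j \<le> n - k" using that by simp
      show ?thesis unfolding op_plus_def gx[OF m] gx[OF that(1)] gx[OF that(2)]
        using assms by (auto simp: min_def)
    qed
  qed
  have times: "op_times n (g i) (g j) = g (if b < j then n - k else if a < j then i else 0)"
    if "i \<le> n-k" "j \<le> n-k" for i j
  proof
    fix x show "op_times n (g i) (g j) x = g (if b < j then n - k else if a < j then i else 0) x"
    proof -
      define r where "r = (if b < j then n - k else if a < j then i else 0)"
      have r: "r \<le> n - k" using that by (simp add: r_def)
      have v: "g i x < n \<Longrightarrow> g j (g i x) = (if g i x < j then a else if g i x < n - k then b else c)"
        using gx[OF that(2)] by simp
      show ?thesis unfolding op_times_def r_def[symmetric] gx[OF r]
        using v assms that unfolding gx[OF that(1)] r_def by auto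
    qed
  qed
  have sub: "subsemiring n (layer n k c (triangle n a b c)) (triangle n a b c)"
    unfolding subsemiring_def
  proof (intro conjI ballI)
    show "layer n k c (triangle n a b c) \<subseteq> triangle n a b c" by (auto simp: layer_def)
    show "layer n k c (triangle n a b c) \<noteq> {}" using eq by auto
    fix f h assume "f \<in> layer n k c (triangle n a b c)" "h \<in> layer n k c (triangle n a b c)"
    then obtain i j where ij: "i \<le> n-k" "j \<le> n-k" "f = g i" "h = g j" using eq by auto
    show "op_plus n f h \<in> layer n k c (triangle n a b c)"
      using ij plus gin by simp
    show "op_times n f h \<in> layer n k c (triangle n a b c)"
      using ij times gin by simp
  qed
  show ?thesis using eq eq2 sub by simp
qed

end
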